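(* Let $G$ be a discrete group, $\mathbf k\subseteq{\rm Seq}(\mathbf C)$ a $\sigma$-subring with constants $\mathbf C$, $\alpha\in\mathcal C_c(G,\mathbf k)$, and consider the solutions of $\sigma(s)=\alpha\star s$ in $\mathcal C(G,{\rm Seq}(\mathbf C))$, equipped with the topology of pointwise convergence on $\mathbf Z_{\ge0}\times G$. Then: (a) ${\rm Sol}_c(\alpha,L^c)$ is dense in ${\rm Sol}(\alpha,L)$; (b) ${\rm Sol}_{\rm per}(\alpha,L^{\rm per})$ is dense in ${\rm Sol}(\alpha,L)$ if and only if $G$ is residually finite; (c) if $G$ is not finite, ${\rm Sol}_c(\alpha,L^c)\cap{\rm Sol}_{\rm per}(\alpha,L^{\rm per})=\{0\}$; (d) if $G$ is finite, ${\rm Sol}(\alpha,L)={\rm Sol}_c(\alpha,L^c)={\rm Sol}_{\rm per}(\alpha,L^{\rm per})\simeq\mathbf C^{|G|}$.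
   Context: ${\rm Seq}(\mathbf C)$: complex sequences indexed by $t\in\mathbf Z_{\ge0}$ with shift $\sigma(x)^{(t)}=x^{(t+1)}$. The equation $\sigma(s)=\alpha\star s$ means $s_g^{(t+1)}=\sum_{h\in G}\alpha^{(t)}_hs^{(t)}_{h^{-1}g}$. ${\rm Sol}(\alpha,L)$ is the $\mathbf C$-space of all solutions; ${\rm Sol}_c(\alpha,L^c)$ those with $s^{(t)}$ of finite support for every $t$; ${\rm Sol}_{\rm per}(\alpha,L^{\rm per})$ those which are $H$-periodic ($s_{gh}=s_g$ for all $g\in G,h\in H$) for some normal subgroup $H$ of finite index in $G$. *)

theory Defs
  imports "HOL-Analysis.Analysis"
begin

text \<open>Sequences Seq(C) are functions nat => complex; the shift is sigma.
  The (possibly non-commutative) group G is a type of class group_add,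
  written additively: the product g h is g + h, h^{-1} is -h, the unit is 0.\<close>

definition shift :: "(nat \<Rightarrow> complex) \<Rightarrow> (nat \<Rightarrow> complex)" where
  "shift x = (\<lambda>t. x (Suc t))"

definition sigma_subring_const_C :: "(nat \<Rightarrow> complex) set \<Rightarrow> bool" where
  "sigma_subring_const_C k \<longleftrightarrow>
     (\<lambda>t. 0) \<in> k \<and> (\<lambda>t. 1) \<in> k \<and>
     (\<forall>x\<in>k. \<forall>y\<in>k. (\<lambda>t. x t + y t) \<in> k \<and> (\<lambda>t. x t * y t) \<in> k) \<and>
     (\<forall>x\<in>k. (\<lambda>t. - x t) \<in> k) \<and>
     (\<forall>x\<in>k. shift x \<in> k) \<and>
     {x\<in>k. shift x = x} = range (\<lambda>c::complex. \<lambda>t::nat. c)"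

definition supp :: "('g \<Rightarrow> nat \<Rightarrow> complex) \<Rightarrow> 'g set" where
  "supp \<alpha> = {h. \<alpha> h \<noteq> (\<lambda>t. 0)}"

definition Cc :: "(nat \<Rightarrow> complex) set \<Rightarrow> ('g \<Rightarrow> nat \<Rightarrow> complex) set" where
  "Cc k = {\<alpha>. finite (supp \<alpha>) \<and> (\<forall>h. \<alpha> h \<in> k)}"

definition Sol :: "('g::group_add \<Rightarrow> nat \<Rightarrow> complex) \<Rightarrow> ('g \<Rightarrow> nat \<Rightarrow> complex) set" where
  "Sol \<alpha> = {s. \<forall>t g. s g (Suc t) = (\<Sum>h\<in>supp \<alpha>. \<alpha> h t * s (- h + g) t)}"

definition Sol_c :: "('g::group_add \<Rightarrow> nat \<Rightarrow> complex) \<Rightarrow> ('g \<Rightarrow> nat \<Rightarrow> complex) set" where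
  "Sol_c \<alpha> = {s \<in> Sol \<alpha>. \<forall>t. finite {g. s g t \<noteq> 0}}"

definition normal_subgroup :: "'g::group_add set \<Rightarrow> bool" where
  "normal_subgroup H \<longleftrightarrow> 0 \<in> H \<and> (\<forall>x\<in>H. \<forall>y\<in>H. x + y \<in> H) \<and> (\<forall>x\<in>H. - x \<in> H)
     \<and> (\<forall>g. \<forall>h\<in>H. g + h + - g \<in> H)"

definition finite_index :: "'g::group_add set \<Rightarrow> bool" where
  "finite_index H \<longleftrightarrow> finite ((\<lambda>g. (\<lambda>h. g + h) ` H) ` UNIV)"

definition residually_finite :: "'g::group_add itself \<Rightarrow> bool" where
  "residually_finite _ \<longleftrightarrow>
     (\<forall>g::'g. g \<noteq> 0 \<longrightarrow> (\<exists>H. normal_subgroup H \<and> finite_index H \<and> g \<notin> H))"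

definition Sol_per :: "('g::group_add \<Rightarrow> nat \<Rightarrow> complex) \<Rightarrow> ('g \<Rightarrow> nat \<Rightarrow> complex) set" where
  "Sol_per \<alpha> = {s \<in> Sol \<alpha>. \<exists>H. normal_subgroup H \<and> finite_index H \<and>
      (\<forall>g. \<forall>h\<in>H. s (g + h) = s g)}"

end

theory Submission imports Defs begin

lemma tendsto_fun_iff:
  fixes f :: "'a \<Rightarrow> 'b \<Rightarrow> 'c::topological_space"
  shows "(f \<longlongrightarrow> l) F \<longleftrightarrow> (\<forall>i. ((\<lambda>c. f c i) \<longlongrightarrow> l i) F)"
proof -
  have "(f \<longlongrightarrow> l) F \<longleftrightarrow> limitin (product_topology (\<lambda>i. euclidean) UNIV) f l F"
    by (simp add: euclidean_product_topology)
  also have "\<dots> \<longleftrightarrow> (\<forall>i. ((\<lambda>c. f c i) \<longlongrightarrow> l i) F)"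
    by (subst limitin_componentwise) simp
  finally show ?thesis .
qed

primrec solseq :: "('g::group_add \<Rightarrow> nat \<Rightarrow> complex) \<Rightarrow> ('g \<Rightarrow> complex) \<Rightarrow> nat \<Rightarrow> 'g \<Rightarrow> complex" where
  "solseq \<alpha> x 0 = x"
| "solseq \<alpha> x (Suc t) = (\<lambda>g. \<Sum>h\<in>supp \<alpha>. \<alpha> h t * solseq \<alpha> x t (- h + g))"

definition mksol :: "('g::group_add \<Rightarrow> nat \<Rightarrow> complex) \<Rightarrow> ('g \<Rightarrow> complex) \<Rightarrow> 'g \<Rightarrow> nat \<Rightarrow> complex" where
  "mksol \<alpha> x = (\<lambda>g t. solseq \<alpha> x t g)"

lemma mksol_Sol: "mksol \<alpha> x \<in> Sol \<alpha>"
  by (simp add: Sol_def mksol_def)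

lemma mksol_0: "mksol \<alpha> x g 0 = x g"
  by (simp add: mksol_def)

primrec dep :: "('g::group_add \<Rightarrow> nat \<Rightarrow> complex) \<Rightarrow> nat \<Rightarrow> 'g \<Rightarrow> 'g set" where
  "dep \<alpha> 0 g = {g}"
| "dep \<alpha> (Suc t) g = (\<Union>h\<in>supp \<alpha>. dep \<alpha> t (- h + g))"

lemma finite_dep: "finite (supp \<alpha>) \<Longrightarrow> finite (dep \<alpha> t g)"
  by (induction t arbitrary: g) auto

lemma dep_agree:
  assumes "s \<in> Sol \<alpha>" "s' \<in> Sol \<alpha>" "\<forall>g'\<in>dep \<alpha> t g. s g' 0 = s' g' 0"
  shows "s g t = s' g t"
  using assms(3)
proof (induction t arbitrary: g)
  case 0 then show ?case by simp
next
  case (Suc t)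
  have "s g (Suc t) = (\<Sum>h\<in>supp \<alpha>. \<alpha> h t * s (- h + g) t)" using assms(1) by (simp add: Sol_def)
  also have "\<dots> = (\<Sum>h\<in>supp \<alpha>. \<alpha> h t * s' (- h + g) t)"
    by (rule sum.cong) (use Suc in auto)
  also have "\<dots> = s' g (Suc t)" using assms(2) by (simp add: Sol_def)
  finally show ?case .
qed

lemma Sol_eqI:
  assumes "s \<in> Sol \<alpha>" "s' \<in> Sol \<alpha>" "\<forall>g. s g 0 = s' g 0"
  shows "s = s'"
  using dep_agree[OF assms(1,2)] assms(3) by blast

lemma closure_net:
  fixes s :: "'g \<Rightarrow> nat \<Rightarrow> complex" and ap :: "'g set \<Rightarrow> 'g \<Rightarrow> nat \<Rightarrow> complex"
  assumes "\<And>F. finite F \<Longrightarrow> ap F \<in> A"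
    and "\<And>g t. eventually (\<lambda>F. ap F g t = s g t) (finite_subsets_at_top UNIV)"
  shows "s \<in> closure A"
proof -
  have "(ap \<longlongrightarrow> s) (finite_subsets_at_top UNIV)"
    unfolding tendsto_fun_iff using assms(2) by (auto intro: tendsto_eventually)
  moreover have "eventually (\<lambda>F. ap F \<in> closure A) (finite_subsets_at_top UNIV)"
    using assms(1) closure_subset by (auto intro!: eventually_finite_subsets_at_top_weakI)
  ultimately show ?thesis
    by (intro Lim_in_closed_set[of "closure A" ap "finite_subsets_at_top UNIV"]) auto
qed

lemma dense_net:
  fixes s :: "'g::group_add \<Rightarrow> nat \<Rightarrow> complex"
  assumes fin: "finite (supp \<alpha>)" and s: "s \<in> Sol \<alpha>"
    and A: "\<And>F. finite F \<Longrightarrow> ap F \<in> A" and AS: "\<And>F. finite F \<Longrightarrow> ap F \<in> Sol \<alpha>"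
    and ag: "\<And>F g. finite F \<Longrightarrow> g \<in> F \<Longrightarrow> ap F g 0 = s g 0"
  shows "s \<in> closure A"
proof (rule closure_net[of ap])
  fix g t
  show "eventually (\<lambda>F. ap F g t = s g t) (finite_subsets_at_top UNIV)"
    unfolding eventually_finite_subsets_at_top
  proof (intro exI conjI allI impI)
    show "finite (dep \<alpha> t g)" using fin finite_dep by blast
    fix Y assume "finite Y \<and> dep \<alpha> t g \<subseteq> Y \<and> Y \<subseteq> UNIV"
    then show "ap Y g t = s g t"
      using dep_agree[OF AS s, of Y t g] ag by blast
  qed auto
qed (use A in auto)

lemma solseq_finite:
  assumes "finite (supp \<alpha>)" "finite {g. x g \<noteq> 0}"
  shows "finite {g. solseq \<alpha> x t g \<noteq> 0}"
proof (induction t)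
  case 0 then show ?case using assms by simp
next
  case (Suc t)
  have "{g. solseq \<alpha> x (Suc t) g \<noteq> 0} \<subseteq> (\<lambda>(h,g'). h + g') ` (supp \<alpha> \<times> {g. solseq \<alpha> x t g \<noteq> 0})"
  proof
    fix g assume "g \<in> {g. solseq \<alpha> x (Suc t) g \<noteq> 0}"
    then obtain h where h: "h \<in> supp \<alpha>" "solseq \<alpha> x t (- h + g) \<noteq> 0"
      by (auto elim: sum.not_neutral_contains_not_neutral)
    then have "(h, - h + g) \<in> supp \<alpha> \<times> {g. solseq \<alpha> x t g \<noteq> 0}" by simp
    moreover have "g = (\<lambda>(h,g'). h + g') (h, - h + g)" by (simp add: add.assoc[symmetric])
    ultimately show "g \<in> (\<lambda>(h,g'). h + g') ` (supp \<alpha> \<times> {g. solseq \<alpha> x t g \<noteq> 0})" by blast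
  qed
  moreover have "finite ((\<lambda>(h,g'). h + g') ` (supp \<alpha> \<times> {g. solseq \<alpha> x t g \<noteq> 0}))"
    using Suc assms(1) by auto
  ultimately show ?case by (rule finite_subset)
qed

lemma solseq_periodic:
  assumes "\<And>g. x (g + h) = x g"
  shows "solseq \<alpha> x t (g + h) = solseq \<alpha> x t g"
proof (induction t arbitrary: g)
  case 0 then show ?case using assms by simp
next
  case (Suc t)
  show ?case using Suc by (simp add: add.assoc[symmetric])
qed

lemma ns_add: "normal_subgroup H \<Longrightarrow> x \<in> H \<Longrightarrow> y \<in> H \<Longrightarrow> x + y \<in> H"
  unfolding normal_subgroup_def by blast

lemma ns_minus: "normal_subgroup H \<Longrightarrow> x \<in> H \<Longrightarrow> - x \<in> H"
  unfolding normal_subgroup_def by blast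

lemma ns_zero: "normal_subgroup H \<Longrightarrow> 0 \<in> H"
  unfolding normal_subgroup_def by blast

lemma ns_UNIV: "normal_subgroup (UNIV::'g::group_add set)"
  by (simp add: normal_subgroup_def)

lemma fi_UNIV: "finite_index (UNIV::'g::group_add set)"
proof -
  have "\<And>g::'g. range ((+) g) = UNIV"
    by (metis add_minus_cancel surj_def)
  then have "(\<lambda>g::'g. (+) g ` UNIV) ` UNIV = {UNIV}" by auto
  then show ?thesis by (simp add: finite_index_def)
qed

lemma ns_Int: "normal_subgroup H1 \<Longrightarrow> normal_subgroup H2 \<Longrightarrow> normal_subgroup (H1 \<inter> H2)"
  by (simp add: normal_subgroup_def)

lemma fi_Int:
  fixes H1 :: "'g::group_add set"
  assumes "finite_index H1" "finite_index H2"
  shows "finite_index (H1 \<inter> H2)"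
proof -
  let ?C1 = "(\<lambda>g. (+) g ` H1) ` UNIV" and ?C2 = "(\<lambda>g. (+) g ` H2) ` UNIV"
  have "(\<lambda>g. (+) g ` (H1 \<inter> H2)) ` UNIV \<subseteq> (\<lambda>(A,B). A \<inter> B) ` (?C1 \<times> ?C2)"
  proof
    fix C assume "C \<in> (\<lambda>g. (+) g ` (H1 \<inter> H2)) ` UNIV"
    then obtain g where C: "C = (+) g ` (H1 \<inter> H2)" by blast
    have "inj ((+) g)" by (simp add: inj_on_def)
    then have "C = (+) g ` H1 \<inter> (+) g ` H2" using C by (simp add: image_Int)
    then show "C \<in> (\<lambda>(A,B). A \<inter> B) ` (?C1 \<times> ?C2)" by blast
  qed
  moreover have "finite ((\<lambda>(A,B). A \<inter> B) ` (?C1 \<times> ?C2))"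
    using assms by (simp add: finite_index_def)
  ultimately show ?thesis unfolding finite_index_def by (rule finite_subset)
qed

lemma sep:
  assumes rf: "residually_finite TYPE('g::group_add)"
    and "finite X" "(0::'g) \<notin> X"
  shows "\<exists>H. normal_subgroup H \<and> finite_index H \<and> X \<inter> H = {}"
  using assms(2,3)
proof (induction X rule: finite_induct)
  case empty then show ?case using ns_UNIV fi_UNIV by blast
next
  case (insert x X)
  then obtain H where H: "normal_subgroup H" "finite_index H" "X \<inter> H = {}" by auto
  from insert rf obtain H' where H': "normal_subgroup H'" "finite_index H'" "x \<notin> H'"
    unfolding residually_finite_def by auto
  show ?case
    by (rule exI[of _ "H \<inter> H'"]) (use H H' ns_Int fi_Int in auto)
qed



definition Xd :: "'g::group_add set \<Rightarrow> 'g set" where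
  "Xd F = (\<lambda>(a,b). - a + b) ` {(a,b). a \<in> F \<and> b \<in> F \<and> a \<noteq> b}"

definition HFd :: "'g::group_add set \<Rightarrow> 'g set" where
  "HFd F = (SOME H. normal_subgroup H \<and> finite_index H \<and> Xd F \<inter> H = {})"

definition xFd :: "('g::group_add \<Rightarrow> nat \<Rightarrow> complex) \<Rightarrow> 'g set \<Rightarrow> 'g \<Rightarrow> complex" where
  "xFd s F g = (if \<exists>a\<in>F. - a + g \<in> HFd F then s (SOME a. a \<in> F \<and> - a + g \<in> HFd F) 0 else 0)"

lemma Xd_finite: "finite F \<Longrightarrow> finite (Xd F)"
  unfolding Xd_def by (rule finite_imageI, rule finite_subset[of _ "F \<times> F"]) auto

lemma Xd_zero: "(0::'g::group_add) \<notin> Xd F"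
proof
  assume "(0::'g) \<in> Xd F"
  then obtain a b :: 'g where ab: "a \<noteq> b" "- a + b = 0" unfolding Xd_def by auto
  have "a + (- a + b) = a + 0" using ab(2) by (rule arg_cong)
  then have "b = a" by simp
  then show False using ab(1) by simp
qed

lemma HFd_prop:
  assumes rf: "residually_finite TYPE('g::group_add)" and F: "finite (F::'g set)"
  shows "normal_subgroup (HFd F) \<and> finite_index (HFd F) \<and> Xd F \<inter> HFd F = {}"
proof -
  have "\<exists>H. normal_subgroup H \<and> finite_index H \<and> Xd F \<inter> H = {}"
    by (rule sep[OF rf Xd_finite[OF F] Xd_zero])
  then show ?thesis unfolding HFd_def by (rule someI_ex)
qed

lemma xFd_per:
  assumes ns: "normal_subgroup (HFd F)" and h: "h \<in> HFd F"
  shows "xFd s F (g + h) = xFd s F g"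
proof -
  have eqa: "(- a + (g + h) \<in> HFd F) = (- a + g \<in> HFd F)" for a
  proof
    assume "- a + (g + h) \<in> HFd F"
    then have "- a + (g + h) + - h \<in> HFd F" by (rule ns_add[OF ns _ ns_minus[OF ns h]])
    moreover have "- a + (g + h) + - h = - a + g" by (simp only: add.assoc add.right_inverse add_0_right)
    ultimately show "- a + g \<in> HFd F" by (simp only:)
  next
    assume "- a + g \<in> HFd F"
    then have "- a + g + h \<in> HFd F" by (rule ns_add[OF ns _ h])
    then show "- a + (g + h) \<in> HFd F" by (simp add: add.assoc)
  qed
  show ?thesis unfolding xFd_def by (simp only: eqa)
qed

lemma xFd_ag:
  assumes ns: "normal_subgroup (HFd F)" and dis: "Xd F \<inter> HFd F = {}" and g: "g \<in> F"
  shows "xFd s F g = s g 0"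
proof -
  have gg: "- g + g \<in> HFd F" using ns_zero[OF ns] by simp
  have ex: "\<exists>a\<in>F. - a + g \<in> HFd F" using g gg by blast
  have "(SOME a. a \<in> F \<and> - a + g \<in> HFd F) = g"
  proof (rule some_equality)
    show "g \<in> F \<and> - g + g \<in> HFd F" using g gg by blast
  next
    fix a assume a: "a \<in> F \<and> - a + g \<in> HFd F"
    show "a = g"
    proof (rule ccontr)
      assume "a \<noteq> g"
      then have "- a + g \<in> Xd F" using a g unfolding Xd_def by auto
      then show False using a dis by blast
    qed
  qed
  then show ?thesis using ex unfolding xFd_def by simp
qed

lemma part_a:
  assumes fin: "finite (supp \<alpha>)"
  shows "Sol \<alpha> \<subseteq> closure (Sol_c \<alpha>)"
proof
  fix s assume s: "s \<in> Sol \<alpha>"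
  let ?ap = "\<lambda>F. mksol \<alpha> (\<lambda>g. if g \<in> F then s g 0 else 0)"
  show "s \<in> closure (Sol_c \<alpha>)"
  proof (rule dense_net[OF fin s, of ?ap])
    fix F :: "'a set" assume F: "finite F"
    have "finite {g. (if g \<in> F then s g 0 else 0) \<noteq> 0}"
      by (rule finite_subset[OF _ F]) auto
    then show "?ap F \<in> Sol_c \<alpha>"
      using solseq_finite[OF fin] mksol_Sol by (simp add: Sol_c_def mksol_def)
  qed (auto simp: mksol_Sol mksol_0)
qed

lemma part_b1:
  assumes fin: "finite (supp \<alpha>)" and rf: "residually_finite TYPE('g::group_add)"
  shows "Sol (\<alpha>::'g \<Rightarrow> nat \<Rightarrow> complex) \<subseteq> closure (Sol_per \<alpha>)"
proof
  fix s assume s: "s \<in> Sol \<alpha>"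
  show "s \<in> closure (Sol_per \<alpha>)"
  proof (rule dense_net[OF fin s, of "\<lambda>F. mksol \<alpha> (xFd s F)"])
    fix F :: "'g set" assume F: "finite F"
    note P = HFd_prop[OF rf F]
    have "\<forall>g. \<forall>h\<in>HFd F. mksol \<alpha> (xFd s F) (g + h) = mksol \<alpha> (xFd s F) g"
    proof (intro allI ballI)
      fix g h assume h: "h \<in> HFd F"
      have per: "\<And>g. xFd s F (g + h) = xFd s F g" by (rule xFd_per[OF conjunct1[OF P] h])
      show "mksol \<alpha> (xFd s F) (g + h) = mksol \<alpha> (xFd s F) g"
        unfolding mksol_def by (intro ext solseq_periodic per)
    qed
    then show "mksol \<alpha> (xFd s F) \<in> Sol_per \<alpha>"
      unfolding Sol_per_def
      by (intro CollectI conjI mksol_Sol exI[of _ "HFd F"]) (use P in auto)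
  next
    fix F g assume F: "finite (F::'g set)" and g: "g \<in> F"
    note P = HFd_prop[OF rf F]
    have "xFd s F g = s g 0"
      by (rule xFd_ag[OF conjunct1[OF P] conjunct2[OF conjunct2[OF P]] g])
    then show "mksol \<alpha> (xFd s F) g 0 = s g 0" by (simp add: mksol_0)
  qed (rule mksol_Sol)
qed


lemma part_b2:
  assumes nrf: "\<not> residually_finite TYPE('g::group_add)"
  shows "\<not> Sol (\<alpha>::'g \<Rightarrow> nat \<Rightarrow> complex) \<subseteq> closure (Sol_per \<alpha>)"
proof
  assume sub: "Sol \<alpha> \<subseteq> closure (Sol_per \<alpha>)"
  from nrf obtain g0 :: 'g where g0: "g0 \<noteq> 0" "\<And>H. normal_subgroup H \<Longrightarrow> finite_index H \<Longrightarrow> g0 \<in> H"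
    unfolding residually_finite_def by blast
  let ?S = "{f::'g \<Rightarrow> nat \<Rightarrow> complex. f g0 0 = f 0 0}"
  have "continuous_on UNIV (\<lambda>f::'g \<Rightarrow> nat \<Rightarrow> complex. f g0 0)"
    by (rule continuous_on_product_then_coordinatewise[where f="\<lambda>f::'g \<Rightarrow> nat \<Rightarrow> complex. f g0" and i=0])
       (rule continuous_on_product_coordinates)
  moreover have "continuous_on UNIV (\<lambda>f::'g \<Rightarrow> nat \<Rightarrow> complex. f 0 0)"
    by (rule continuous_on_product_then_coordinatewise[where f="\<lambda>f::'g \<Rightarrow> nat \<Rightarrow> complex. f 0" and i=0])
       (rule continuous_on_product_coordinates)
  ultimately have cl: "closed ?S" by (intro closed_Collect_eq) auto
  have "Sol_per \<alpha> \<subseteq> ?S"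
  proof
    fix p assume "p \<in> Sol_per \<alpha>"
    then obtain H where "normal_subgroup H" "finite_index H" "\<forall>g. \<forall>h\<in>H. p (g + h) = p g"
      unfolding Sol_per_def by blast
    then have "p (0 + g0) = p 0" using g0 by blast
    then show "p \<in> ?S" by simp
  qed
  then have "closure (Sol_per \<alpha>) \<subseteq> ?S" using cl by (rule closure_minimal)
  moreover have "mksol \<alpha> (\<lambda>g. if g = g0 then 1 else 0) \<in> Sol \<alpha>" by (rule mksol_Sol)
  ultimately have "mksol \<alpha> (\<lambda>g. if g = g0 then 1 else 0) \<in> ?S" using sub by blast
  then show False using g0(1) by (simp add: mksol_0)
qed

lemma zero_Sol: "(\<lambda>g t. 0) \<in> Sol \<alpha>" by (simp add: Sol_def)

lemma part_c:
  assumes inf: "infinite (UNIV :: 'g::group_add set)"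
  shows "Sol_c (\<alpha>::'g \<Rightarrow> nat \<Rightarrow> complex) \<inter> Sol_per \<alpha> = {\<lambda>g t. 0}"
proof
  show "{\<lambda>g t. 0} \<subseteq> Sol_c \<alpha> \<inter> Sol_per \<alpha>"
    using zero_Sol ns_UNIV fi_UNIV by (auto simp: Sol_c_def Sol_per_def)
next
  show "Sol_c \<alpha> \<inter> Sol_per \<alpha> \<subseteq> {\<lambda>g t. 0}"
  proof
    fix s assume s: "s \<in> Sol_c \<alpha> \<inter> Sol_per \<alpha>"
    then obtain H where H: "normal_subgroup H" "finite_index H" "\<forall>g. \<forall>h\<in>H. s (g + h) = s g"
      unfolding Sol_per_def by blast
    have "s g t = 0" for g t
    proof (rule ccontr)
      assume nz: "s g t \<noteq> 0"
      have "(+) g ` H \<subseteq> {g. s g t \<noteq> 0}"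
      proof
        fix y assume "y \<in> (+) g ` H"
        then obtain h where h: "h \<in> H" "y = g + h" by blast
        have "s (g + h) = s g" using H(3) h(1) by blast
        then show "y \<in> {g. s g t \<noteq> 0}" using nz h(2) by simp
      qed
      moreover have "finite {g. s g t \<noteq> 0}" using s by (simp add: Sol_c_def)
      ultimately have "finite ((+) g ` H)" by (rule finite_subset)
      moreover have "inj_on ((+) g) H" by (simp add: inj_on_def)
      ultimately have finH: "finite H" using finite_image_iff by blast
      have "UNIV = \<Union>((\<lambda>g. (+) g ` H) ` UNIV)"
      proof -
        have "x \<in> (+) x ` H" for x
        proof -
          have "0 \<in> H" using H(1) unfolding normal_subgroup_def by blast
          then have "x + 0 \<in> (+) x ` H" by (rule imageI)
          then show ?thesis by simp
        qed
        then show ?thesis by (intro set_eqI iffI UN_I[OF UNIV_I]) auto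
      qed
      moreover have "finite (\<Union>((\<lambda>g. (+) g ` H) ` UNIV))"
        using H(2) finH unfolding finite_index_def by (intro finite_Union) auto
      ultimately have "finite (UNIV :: 'g set)" by metis
      then show False using inf by blast
    qed
    then show "s \<in> {\<lambda>g t. 0}" by auto
  qed
qed

lemma part_d:
  assumes fin: "finite (UNIV :: 'g::group_add set)"
  shows "Sol (\<alpha>::'g \<Rightarrow> nat \<Rightarrow> complex) = Sol_c \<alpha> \<and> Sol_c \<alpha> = Sol_per \<alpha> \<and>
           (\<exists>f :: ('g \<Rightarrow> nat \<Rightarrow> complex) \<Rightarrow> ('g \<Rightarrow> complex).
              bij_betw f (Sol \<alpha>) UNIV \<and>
              (\<forall>a b s s'. s \<in> Sol \<alpha> \<longrightarrow> s' \<in> Sol \<alpha> \<longrightarrow>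
                 f (\<lambda>g t. a * s g t + b * s' g t) = (\<lambda>g. a * f s g + b * f s' g)))"
proof (intro conjI)
  show 1: "Sol \<alpha> = Sol_c \<alpha>" using fin by (auto simp: Sol_c_def intro: finite_subset)
  have ns0: "normal_subgroup ({0}::'g set)" by (simp add: normal_subgroup_def)
  have fi0: "finite_index ({0}::'g set)" using fin by (simp add: finite_index_def)
  show "Sol_c \<alpha> = Sol_per \<alpha>"
    using 1 ns0 fi0 by (auto simp: Sol_per_def Sol_c_def)
  show "\<exists>f :: ('g \<Rightarrow> nat \<Rightarrow> complex) \<Rightarrow> ('g \<Rightarrow> complex).
              bij_betw f (Sol \<alpha>) UNIV \<and>
              (\<forall>a b s s'. s \<in> Sol \<alpha> \<longrightarrow> s' \<in> Sol \<alpha> \<longrightarrow>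
                 f (\<lambda>g t. a * s g t + b * s' g t) = (\<lambda>g. a * f s g + b * f s' g))"
  proof (rule exI[of _ "\<lambda>s g. s g 0"], intro conjI allI impI)
    show "bij_betw (\<lambda>s g. s g 0) (Sol \<alpha>) UNIV"
      unfolding bij_betw_def
    proof
      show "inj_on (\<lambda>s g. s g 0) (Sol \<alpha>)"
      proof (rule inj_onI)
        fix s s' assume "s \<in> Sol \<alpha>" "s' \<in> Sol \<alpha>" "(\<lambda>g. s g 0) = (\<lambda>g. s' g 0)"
        then show "s = s'" by (metis Sol_eqI)
      qed
      show "(\<lambda>s g. s g 0) ` Sol \<alpha> = UNIV"
      proof (intro set_eqI iffI)
        fix x :: "'g \<Rightarrow> complex"
        have "x = (\<lambda>g. mksol \<alpha> x g 0)" by (simp add: mksol_0)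
        then show "x \<in> (\<lambda>s g. s g 0) ` Sol \<alpha>" using mksol_Sol by blast
      qed auto
    qed
  next
    fix a b :: complex and s s' :: "'g \<Rightarrow> nat \<Rightarrow> complex"
    show "(\<lambda>g. a * s g 0 + b * s' g 0) = (\<lambda>g. a * s g 0 + b * s' g 0)" by (rule refl)
  qed
qed


theorem proposition1p13:
  fixes k :: "(nat \<Rightarrow> complex) set"
    and \<alpha> :: "'g::group_add \<Rightarrow> nat \<Rightarrow> complex"
  assumes "sigma_subring_const_C k"
    and "\<alpha> \<in> Cc k"
  shows "(Sol \<alpha> \<subseteq> closure (Sol_c \<alpha>)) \<and>
         (Sol \<alpha> \<subseteq> closure (Sol_per \<alpha>) \<longleftrightarrow> residually_finite TYPE('g)) \<and>
         (infinite (UNIV :: 'g set) \<longrightarrow> Sol_c \<alpha> \<inter> Sol_per \<alpha> = {\<lambda>g t. 0}) \<and>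
         (finite (UNIV :: 'g set) \<longrightarrow>
           Sol \<alpha> = Sol_c \<alpha> \<and> Sol_c \<alpha> = Sol_per \<alpha> \<and>
           (\<exists>f :: ('g \<Rightarrow> nat \<Rightarrow> complex) \<Rightarrow> ('g \<Rightarrow> complex).
              bij_betw f (Sol \<alpha>) UNIV \<and>
              (\<forall>a b s s'. s \<in> Sol \<alpha> \<longrightarrow> s' \<in> Sol \<alpha> \<longrightarrow>
                 f (\<lambda>g t. a * s g t + b * s' g t) = (\<lambda>g. a * f s g + b * f s' g))))"
proof -
  have fin: "finite (supp \<alpha>)" using assms(2) by (simp add: Cc_def)
  have b: "Sol \<alpha> \<subseteq> closure (Sol_per \<alpha>) \<longleftrightarrow> residually_finite TYPE('g)"
  proof
    assume "Sol \<alpha> \<subseteq> closure (Sol_per \<alpha>)"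
    then show "residually_finite TYPE('g)" using part_b2[of \<alpha>] by (rule contrapos_pp) simp
  next
    assume "residually_finite TYPE('g)"
    then show "Sol \<alpha> \<subseteq> closure (Sol_per \<alpha>)" by (rule part_b1[OF fin])
  qed
  have a: "Sol \<alpha> \<subseteq> closure (Sol_c \<alpha>)" by (rule part_a[OF fin])
  have c: "infinite (UNIV :: 'g set) \<longrightarrow> Sol_c \<alpha> \<inter> Sol_per \<alpha> = {\<lambda>g t. 0}"
    by (rule impI, rule part_c)
  have d: "finite (UNIV :: 'g set) \<longrightarrow>
           Sol \<alpha> = Sol_c \<alpha> \<and> Sol_c \<alpha> = Sol_per \<alpha> \<and>
           (\<exists>f :: ('g \<Rightarrow> nat \<Rightarrow> complex) \<Rightarrow> ('g \<Rightarrow> complex).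
              bij_betw f (Sol \<alpha>) UNIV \<and>
              (\<forall>a b s s'. s \<in> Sol \<alpha> \<longrightarrow> s' \<in> Sol \<alpha> \<longrightarrow>
                 f (\<lambda>g t. a * s g t + b * s' g t) = (\<lambda>g. a * f s g + b * f s' g)))"
    by (rule impI, rule part_d)
  show ?thesis by (rule conjI[OF a conjI[OF b conjI[OF c d]]])
qed

end
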